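(* Let $$J(\mu)=\int_{\max(-\mu,-1)}^{1}\frac{dx}{\sqrt{1-x^2}\sqrt{\mu+x}},\qquad \mu\ge-1.$$ Then there is an absolute constant $C$ such that $|\mu-1|\,|J'(\mu)|\le C\,J(\mu)$ for all $\mu>-1$, $\mu\neq1$.
   Context: $J$ is the kernel of the representation formula for the radial $2+1$-dimensional flat wave equation; it is smooth on $(-1,1)\cup(1,\infty)$. *)

theory Defs
  imports "HOL-Analysis.Analysis"
begin

text \<open>The integral is improper (integrable singularities at endpoints); we use the
  Henstock-Kurzweil integral, which for this nonnegative integrand coincides with the
  Lebesgue integral whenever it is finite.\<close>
definition J :: "real \<Rightarrow> real" where
  "J \<mu> = integral {max (-\<mu>) (-1) .. 1} (\<lambda>x. 1 / (sqrt (1 - x\<^sup>2) * sqrt (\<mu> + x)))"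

end

theory Submission
  imports Defs
begin

lemma aux1: fixes u :: real assumes "u > 0"
  shows "- (inverse (sqrt u) / 2 * A * inverse ((sqrt u)\<^sup>2)) = - A / (2 * u * sqrt u)"
proof -
  have "(sqrt u)\<^sup>2 = u" using assms by simp
  then show ?thesis by (simp add: field_simps)
qed
lemma dlin: fixes A B x :: real assumes p: "A * x + B > 0"
  shows "((\<lambda>x. 1 / sqrt (A * x + B)) has_field_derivative - A / (2 * (A * x + B) * sqrt (A * x + B))) (at x within S)"
proof -
  have "((\<lambda>x. sqrt (A * x + B)) has_field_derivative inverse (sqrt (A * x + B)) / 2 * A) (at x within S)"
    apply (rule DERIV_real_sqrt_generic[THEN DERIV_chain2])
    using p apply simp_all
    by (rule derivative_eq_intros refl | simp)+
  from DERIV_inverse_fun[OF this] have A: "((\<lambda>x. inverse (sqrt (A * x + B))) has_field_derivative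
     - (inverse (sqrt (A * x + B)) / 2 * A * inverse ((sqrt (A * x + B))\<^sup>2))) (at x within S)"
    using p by simp
  show ?thesis unfolding inverse_eq_divide[symmetric] using A unfolding aux1[OF p] .
qed
lemma aux2: fixes D s :: real assumes "D > 0" shows "2 * (- (s - 1) / (2 * D * sqrt D)) = (1 - s) / (D * sqrt D)"
  using assms by (simp add: field_simps)
lemma d2: fixes s x :: real assumes p: "1 - x + (1 + x) * s > 0"
  shows "((\<lambda>x. 2 / sqrt (1 - x + (1 + x) * s)) has_field_derivative
     (1 - s) / ((1 - x + (1 + x) * s) * sqrt (1 - x + (1 + x) * s))) (at x within S)"
proof -
  have e: "\<And>x. 1 - x + (1 + x) * s = (s - 1) * x + (1 + s)" by (simp add: algebra_simps)
  have p': "(s - 1) * x + (1 + s) > 0" using p e by simp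
  have "((\<lambda>x. 2 * (1 / sqrt ((s - 1) * x + (1 + s)))) has_field_derivative
      2 * (- (s - 1) / (2 * ((s - 1) * x + (1 + s)) * sqrt ((s - 1) * x + (1 + s))))) (at x within S)"
    by (rule DERIV_cmult, rule dlin, rule p')
  moreover have "2 * (- (s - 1) / (2 * ((s - 1) * x + (1 + s)) * sqrt ((s - 1) * x + (1 + s))))
     = (1 - s) / (((s - 1) * x + (1 + s)) * sqrt ((s - 1) * x + (1 + s)))"
    using aux2[OF p'] .
  ultimately show ?thesis unfolding e by (simp only: times_divide_eq_right mult_1_right)
qed
lemma d1: fixes c x :: real assumes p: "x - c > 0"
  shows "((\<lambda>x. 1 / sqrt (x - c)) has_field_derivative - 1 / (2 * (x - c) * sqrt (x - c))) (at x within S)"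
  using dlin[of 1 x "-c" S] p by simp
lemma J1: assumes m: "\<mu> > 1"
  shows "J \<mu> = integral {0..pi} (\<lambda>t. 1 / sqrt (\<mu> - cos t))"
proof -
  have mx: "max (-\<mu>) (-1) = -1" using m by simp
  have cf: "continuous_on {0..pi} (\<lambda>t. 1 / sqrt (\<mu> - cos t))"
  proof (intro continuous_intros ballI)
    fix t have "\<mu> - cos t > 0" using m cos_le_one[of t] by linarith
    then show "sqrt (\<mu> - cos t) \<noteq> 0" by simp
  qed
  have d: "((\<lambda>x. arccos (-x)) has_field_derivative 1 / sqrt (1 - x\<^sup>2)) (at x within {-1..1})"
    if "x \<in> {-1..1} - {-1,1}" for x
  proof -
    have x: "-1 < x" "x < 1" using that by auto
    have "((\<lambda>x. arccos (-x)) has_field_derivative (-inverse (sqrt (1 - (-x)\<^sup>2))) * (-1)) (at x)"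
      by (rule DERIV_chain2[where f=arccos]) (use x in \<open>auto intro!: DERIV_arccos derivative_eq_intros\<close>)
    then show ?thesis by (auto intro: has_field_derivative_at_within simp: divide_inverse)
  qed
  have "((\<lambda>x. (1 / sqrt (1 - x\<^sup>2)) *\<^sub>R (1 / sqrt (\<mu> - cos (arccos (-x))))) has_integral
          integral {arccos (-(-1))..arccos (-1)} (\<lambda>t. 1 / sqrt (\<mu> - cos t))) {-1..1}"
    apply (rule has_integral_substitution_strong[where s="{-1,1}" and c=0 and d=pi and
       f="\<lambda>t. 1 / sqrt (\<mu> - cos t)" and g="\<lambda>x. arccos (-x)" and g'="\<lambda>x. 1 / sqrt (1 - x\<^sup>2)"])
    using cf d by (auto intro!: continuous_intros continuous_on_arccos arccos_ubound arccos_lbound)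
  then have "((\<lambda>x. 1 / sqrt (1 - x\<^sup>2) * (1 / sqrt (\<mu> - cos (arccos (-x))))) has_integral
          integral {0..pi} (\<lambda>t. 1 / sqrt (\<mu> - cos t))) {-1..1}" by simp
  then have "((\<lambda>x. 1 / (sqrt (1 - x\<^sup>2) * sqrt (\<mu> + x))) has_integral
          integral {0..pi} (\<lambda>t. 1 / sqrt (\<mu> - cos t))) {-1..1}"
    by (rule has_integral_eq[rotated]) (auto simp: cos_arccos)
  then show ?thesis unfolding J_def mx by (rule integral_unique)
qed

lemma J2: assumes m: "-1 < \<mu>" "\<mu> < 1"
  shows "J \<mu> = integral {0..pi/2} (\<lambda>t. 2 / sqrt (1 - \<mu> + (1 + \<mu>) * (sin t)\<^sup>2))"
proof -
  define a where "a = 1 + \<mu>"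
  have a: "a > 0" using m by (simp add: a_def)
  have mx: "max (-\<mu>) (-1) = -\<mu>" using m by simp
  have cf: "continuous_on {0..pi/2} (\<lambda>t. 2 / sqrt (1 - \<mu> + (1 + \<mu>) * (sin t)\<^sup>2))"
  proof (intro continuous_intros ballI)
    fix t have "1 - \<mu> + (1 + \<mu>) * (sin t)\<^sup>2 > 0" using m
      by (smt (verit) mult_nonneg_nonneg zero_le_power2)
    then show "sqrt (1 - \<mu> + (1 + \<mu>) * (sin t)\<^sup>2) \<noteq> 0" by simp
  qed
  define g where "g = (\<lambda>x. arcsin (sqrt ((x + \<mu>) / a)))"
  have d: "(g has_field_derivative 1 / (2 * sqrt ((1 - x) * (x + \<mu>)))) (at x within {-\<mu>..1})"
    if "x \<in> {-\<mu>..1} - {-\<mu>,1}" for x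
  proof -
    have x: "-\<mu> < x" "x < 1" using that by auto
    define q where "q = (x + \<mu>) / a"
    have q: "0 < q" "q < 1" using x a by (auto simp: q_def a_def field_simps)
    have sq: "sqrt q < 1" using q by simp
    have "(g has_field_derivative inverse (sqrt (1 - (sqrt q)\<^sup>2)) * (inverse (sqrt q) / 2 * (1 / a))) (at x)"
      unfolding g_def q_def
      apply (rule DERIV_chain2[where f=arcsin])
       apply (rule DERIV_arcsin) using q sq real_sqrt_ge_zero[of q] unfolding q_def apply linarith
      using q sq unfolding q_def apply linarith
      using q unfolding q_def by (auto intro!: derivative_eq_intros)
    moreover have "inverse (sqrt (1 - (sqrt q)\<^sup>2)) * (inverse (sqrt q) / 2 * (1 / a)) = 1 / (2 * sqrt ((1 - x) * (x + \<mu>)))"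
    proof -
      have e1: "1 - (sqrt q)\<^sup>2 = (1 - x) / a" using q a by (simp add: q_def a_def field_simps)
      have "sqrt ((1 - x) * (x + \<mu>)) = sqrt ((1 - x) / a) * sqrt q * a"
      proof -
        have "(1 - x) * (x + \<mu>) = ((1 - x) / a) * q * (a * a)" using a by (simp add: q_def field_simps)
        then have "sqrt ((1 - x) * (x + \<mu>)) = sqrt ((1 - x) / a) * sqrt q * sqrt (a * a)"
          by (simp only: real_sqrt_mult)
        then show ?thesis using a by simp
      qed
      then show ?thesis using e1 a q x by (simp add: field_simps)
    qed
    ultimately show ?thesis by (auto intro: has_field_derivative_at_within)
  qed
  have gc: "continuous_on {-\<mu>..1} g" unfolding g_def
  proof (rule continuous_on_arcsin)
    show "continuous_on {-\<mu>..1} (\<lambda>x. sqrt ((x + \<mu>) / a))" using a by (intro continuous_intros) auto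
    show "\<forall>x\<in>{-\<mu>..1}. -1 \<le> sqrt ((x + \<mu>) / a) \<and> sqrt ((x + \<mu>) / a) \<le> 1"
    proof (intro ballI conjI)
    fix x assume x: "x \<in> {-\<mu>..1}"
    have "0 \<le> (x + \<mu>) / a" "(x + \<mu>) / a \<le> 1" using x a by (auto simp: a_def field_simps)
    then show "-1 \<le> sqrt ((x + \<mu>) / a)" "sqrt ((x + \<mu>) / a) \<le> 1"
      by (smt (verit) real_sqrt_ge_zero, simp)
  qed
  qed
  have g0: "g (-\<mu>) = 0" and g1: "g 1 = pi/2" using a by (auto simp: g_def a_def)
  have gi: "g ` {-\<mu>..1} \<subseteq> {0..pi/2}"
  proof
    fix y assume "y \<in> g ` {-\<mu>..1}"
    then obtain x where x: "x \<in> {-\<mu>..1}" "y = g x" by auto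
    have "0 \<le> (x + \<mu>) / a" "(x + \<mu>) / a \<le> 1" using x a by (auto simp: a_def field_simps)
    then have s: "0 \<le> sqrt ((x + \<mu>) / a)" "sqrt ((x + \<mu>) / a) \<le> 1" by auto
    have s2: "-1 \<le> sqrt ((x + \<mu>) / a)" using s(1) by linarith
    show "y \<in> {0..pi/2}" using x s s2 unfolding g_def
      using arcsin_nonneg[of "sqrt ((x + \<mu>) / a)"] arcsin_ubound[of "sqrt ((x + \<mu>) / a)"] by auto
  qed
  have "((\<lambda>x. (1 / (2 * sqrt ((1 - x) * (x + \<mu>)))) *\<^sub>R (2 / sqrt (1 - \<mu> + (1 + \<mu>) * (sin (g x))\<^sup>2))) has_integral
          integral {g (-\<mu>)..g 1} (\<lambda>t. 2 / sqrt (1 - \<mu> + (1 + \<mu>) * (sin t)\<^sup>2))) {-\<mu>..1}"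
    apply (rule has_integral_substitution_strong[where s="{-\<mu>,1}" and c=0 and d="pi/2" and
       f="\<lambda>t. 2 / sqrt (1 - \<mu> + (1 + \<mu>) * (sin t)\<^sup>2)" and g=g and g'="\<lambda>x. 1 / (2 * sqrt ((1 - x) * (x + \<mu>)))"])
    using cf d gc gi m by (auto simp: g0 g1)
  then have "((\<lambda>x. 1 / (sqrt (1 - x\<^sup>2) * sqrt (\<mu> + x))) has_integral
          integral {0..pi/2} (\<lambda>t. 2 / sqrt (1 - \<mu> + (1 + \<mu>) * (sin t)\<^sup>2))) {-\<mu>..1}"
    unfolding g0 g1
  proof (rule has_integral_eq[rotated])
    fix x assume x: "x \<in> {-\<mu>..1}"
    have q: "0 \<le> (x + \<mu>) / a" "(x + \<mu>) / a \<le> 1" using x a by (auto simp: a_def field_simps)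
    have "-1 \<le> sqrt ((x + \<mu>) / a)" using q(1) real_sqrt_ge_zero[of "(x + \<mu>) / a"] by linarith
    then have "sin (g x) = sqrt ((x + \<mu>) / a)" using q by (simp add: g_def sin_arcsin)
    then have "(sin (g x))\<^sup>2 = (x + \<mu>) / a" using q by simp
    then have "1 - \<mu> + (1 + \<mu>) * (sin (g x))\<^sup>2 = 1 + x" using a by (simp add: a_def field_simps)
    moreover have "sqrt (1 - x\<^sup>2) = sqrt (1 - x) * sqrt (1 + x)"
      by (simp add: real_sqrt_mult[symmetric] power2_eq_square algebra_simps)
    moreover have "sqrt ((1 - x) * (x + \<mu>)) = sqrt (1 - x) * sqrt (\<mu> + x)"
      by (simp add: real_sqrt_mult add.commute)
    ultimately show "(1 / (2 * sqrt ((1 - x) * (x + \<mu>)))) *\<^sub>R (2 / sqrt (1 - \<mu> + (1 + \<mu>) * (sin (g x))\<^sup>2))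
       = 1 / (sqrt (1 - x\<^sup>2) * sqrt (\<mu> + x))" by simp
  qed
  then show ?thesis unfolding J_def mx by (rule integral_unique)
qed


lemma D1: assumes m: "\<mu> > 1"
  shows "(J has_field_derivative integral {0..pi} (\<lambda>t. - 1 / (2 * (\<mu> - cos t) * sqrt (\<mu> - cos t)))) (at \<mu>)"
proof -
  have pos: "x - cos t > 0" if "x > 1" for x t :: real using that cos_le_one[of t] by linarith
  have "((\<lambda>x. integral (cbox 0 pi) (\<lambda>t. 1 / sqrt (x - cos t))) has_field_derivative
         integral (cbox 0 pi) (\<lambda>t. - 1 / (2 * (\<mu> - cos t) * sqrt (\<mu> - cos t)))) (at \<mu> within {1<..})"
  proof (rule leibniz_rule_field_derivative)
    fix x t :: real assume x: "x \<in> {1<..}" and "t \<in> cbox 0 pi"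
    have p: "x - cos t > 0" using x pos by auto
    show "((\<lambda>x. 1 / sqrt (x - cos t)) has_field_derivative - 1 / (2 * (x - cos t) * sqrt (x - cos t))) (at x within {1<..})"
      by (rule d1[OF p])
  next
    fix x :: real assume x: "x \<in> {1<..}"
    show "(\<lambda>t. 1 / sqrt (x - cos t)) integrable_on cbox 0 pi"
    proof (intro integrable_continuous_interval[unfolded cbox_interval[symmetric]] continuous_intros ballI)
      fix t assume "t \<in> cbox 0 pi"
      show "sqrt (x - cos t) \<noteq> 0" using pos[of x t] x by simp
    qed
  next
    show "continuous_on ({1<..} \<times> cbox 0 pi) (\<lambda>(x, t). - 1 / (2 * (x - cos t) * sqrt (x - cos t)))"
    proof (unfold split_beta, intro continuous_intros ballI)
      fix p :: "real \<times> real" assume "p \<in> {1<..} \<times> cbox 0 pi"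
      then have "fst p - cos (snd p) > 0" using pos by auto
      then show "2 * (fst p - cos (snd p)) * sqrt (fst p - cos (snd p)) \<noteq> 0" by simp
    qed
  next
    show "\<mu> \<in> {1<..}" using m by simp
  next
    show "convex ({1<..} :: real set)" by simp
  qed
  moreover have aw: "at \<mu> within {1<..} = at \<mu>" using m by (intro at_within_open) auto
  ultimately have "((\<lambda>x. integral {0..pi} (\<lambda>t. 1 / sqrt (x - cos t))) has_field_derivative
         integral {0..pi} (\<lambda>t. - 1 / (2 * (\<mu> - cos t) * sqrt (\<mu> - cos t)))) (at \<mu>)"
    unfolding cbox_interval by simp
  then show ?thesis
    by (rule has_field_derivative_transform_within_open[where S="{1<..}"]) (use m J1 in auto)
qed

lemma D2: assumes m: "-1 < \<mu>" "\<mu> < 1"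
  shows "(J has_field_derivative integral {0..pi/2} (\<lambda>t. (1 - (sin t)\<^sup>2) /
     ((1 - \<mu> + (1 + \<mu>) * (sin t)\<^sup>2) * sqrt (1 - \<mu> + (1 + \<mu>) * (sin t)\<^sup>2)))) (at \<mu>)"
proof -
  have pos: "1 - x + (1 + x) * (sin t)\<^sup>2 > 0" if "-1 < x" "x < 1" for x t :: real
  proof -
    have "(1 + x) * (sin t)\<^sup>2 \<ge> 0" using that by simp
    then show ?thesis using that by linarith
  qed
  have "((\<lambda>x. integral (cbox 0 (pi/2)) (\<lambda>t. 2 / sqrt (1 - x + (1 + x) * (sin t)\<^sup>2))) has_field_derivative
         integral (cbox 0 (pi/2)) (\<lambda>t. (1 - (sin t)\<^sup>2) /
     ((1 - \<mu> + (1 + \<mu>) * (sin t)\<^sup>2) * sqrt (1 - \<mu> + (1 + \<mu>) * (sin t)\<^sup>2)))) (at \<mu> within {-1<..<1})"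
  proof (rule leibniz_rule_field_derivative)
    fix x t :: real assume x: "x \<in> {-1<..<1}" and "t \<in> cbox 0 (pi/2)"
    have p: "1 - x + (1 + x) * (sin t)\<^sup>2 > 0" using x pos by auto
    show "((\<lambda>x. 2 / sqrt (1 - x + (1 + x) * (sin t)\<^sup>2)) has_field_derivative (1 - (sin t)\<^sup>2) /
     ((1 - x + (1 + x) * (sin t)\<^sup>2) * sqrt (1 - x + (1 + x) * (sin t)\<^sup>2))) (at x within {-1<..<1})"
      by (rule d2[OF p])
  next
    fix x :: real assume x: "x \<in> {-1<..<1}"
    show "(\<lambda>t. 2 / sqrt (1 - x + (1 + x) * (sin t)\<^sup>2)) integrable_on cbox 0 (pi/2)"
    proof (intro integrable_continuous_interval[unfolded cbox_interval[symmetric]] continuous_intros ballI)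
      fix t assume "t \<in> cbox 0 (pi/2)"
      show "sqrt (1 - x + (1 + x) * (sin t)\<^sup>2) \<noteq> 0" using pos[of x t] x by simp
    qed
  next
    show "continuous_on ({-1<..<1} \<times> cbox 0 (pi/2)) (\<lambda>(x, t). (1 - (sin t)\<^sup>2) /
     ((1 - x + (1 + x) * (sin t)\<^sup>2) * sqrt (1 - x + (1 + x) * (sin t)\<^sup>2)))"
    proof (unfold split_beta, intro continuous_intros ballI)
      fix p :: "real \<times> real" assume "p \<in> {-1<..<1} \<times> cbox 0 (pi/2)"
      then have "1 - fst p + (1 + fst p) * (sin (snd p))\<^sup>2 > 0" using pos by auto
      then show "(1 - fst p + (1 + fst p) * (sin (snd p))\<^sup>2) * sqrt (1 - fst p + (1 + fst p) * (sin (snd p))\<^sup>2) \<noteq> 0" by simp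
    qed
  next
    show "\<mu> \<in> {-1<..<1}" using m by simp
  next
    show "convex ({-1<..<1} :: real set)" by simp
  qed
  moreover have aw: "at \<mu> within {-1<..<1} = at \<mu>" using m by (intro at_within_open) auto
  ultimately have "((\<lambda>x. integral {0..pi/2} (\<lambda>t. 2 / sqrt (1 - x + (1 + x) * (sin t)\<^sup>2))) has_field_derivative
         integral {0..pi/2} (\<lambda>t. (1 - (sin t)\<^sup>2) /
     ((1 - \<mu> + (1 + \<mu>) * (sin t)\<^sup>2) * sqrt (1 - \<mu> + (1 + \<mu>) * (sin t)\<^sup>2)))) (at \<mu>)"
    unfolding cbox_interval by simp
  then show ?thesis
    by (rule has_field_derivative_transform_within_open[where S="{-1<..<1}"]) (use m J2 in auto)
qed


lemma bnd1: fixes k u :: real assumes "0 \<le> k" "k \<le> u" "u > 0"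
  shows "\<bar>k * (- 1 / (2 * u * sqrt u))\<bar> \<le> 1 / sqrt u"
proof -
  have su: "sqrt u > 0" using assms by simp
  have "\<bar>k * (- 1 / (2 * u * sqrt u))\<bar> = k / (2 * u * sqrt u)" using assms su by (simp add: abs_mult)
  also have "\<dots> \<le> u / (2 * u * sqrt u)" using assms su by (intro divide_right_mono) auto
  also have "\<dots> = 1 / (2 * sqrt u)" using assms by simp
  also have "\<dots> \<le> 1 / sqrt u" using su by (simp add: divide_simps)
  finally show ?thesis .
qed

lemma bnd2: fixes k c D :: real assumes "0 \<le> k" "0 \<le> c" "c \<le> 1" "k \<le> D" "D > 0"
  shows "\<bar>k * (c / (D * sqrt D))\<bar> \<le> 2 / sqrt D"
proof -
  have su: "sqrt D > 0" using assms by simp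
  have "\<bar>k * (c / (D * sqrt D))\<bar> = (k * c) / (D * sqrt D)" using assms su by (simp add: abs_mult)
  also have "\<dots> \<le> D / (D * sqrt D)" using assms su
    by (intro divide_right_mono) (auto intro: order_trans[OF mult_left_le[of c k]])
  also have "\<dots> = 1 / sqrt D" using assms by simp
  also have "\<dots> \<le> 2 / sqrt D" using su by (simp add: divide_simps)
  finally show ?thesis .
qed

theorem mainTheorem20:
  shows "\<exists>C::real. \<forall>\<mu>::real. \<mu> > -1 \<and> \<mu> \<noteq> 1 \<longrightarrow>
           \<bar>\<mu> - 1\<bar> * \<bar>deriv J \<mu>\<bar> \<le> C * J \<mu>"
proof (intro exI[of _ 1] allI impI, elim conjE)
  fix \<mu> :: real assume m1: "\<mu> > -1" and m2: "\<mu> \<noteq> 1"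
  show "\<bar>\<mu> - 1\<bar> * \<bar>deriv J \<mu>\<bar> \<le> 1 * J \<mu>"
  proof (cases "\<mu> > 1")
    case True
    define u where "u = (\<lambda>t. \<mu> - cos t)"
    have upos: "u t > 0" "\<mu> - 1 \<le> u t" for t
    proof -
      have "cos t \<le> 1" "-1 \<le> cos t" by simp_all
      then show "u t > 0" "\<mu> - 1 \<le> u t" using True unfolding u_def by linarith+
    qed
    have dJ: "deriv J \<mu> = integral {0..pi} (\<lambda>t. - 1 / (2 * u t * sqrt (u t)))"
      unfolding u_def by (rule DERIV_imp_deriv[OF D1[OF True]])
    have i1: "(\<lambda>t. \<bar>\<mu> - 1\<bar> * (- 1 / (2 * u t * sqrt (u t)))) integrable_on {0..pi}"
    proof (intro integrable_continuous_interval continuous_intros ballI)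
      fix t show "2 * u t * sqrt (u t) \<noteq> 0" using upos(1)[of t] by simp
    qed (simp add: u_def, intro continuous_intros)+
    have i2: "(\<lambda>t. 1 / sqrt (u t)) integrable_on {0..pi}"
    proof (intro integrable_continuous_interval continuous_intros ballI)
      fix t show "sqrt (u t) \<noteq> 0" using upos(1)[of t] by simp
    qed (simp add: u_def, intro continuous_intros)
    have "\<bar>\<mu> - 1\<bar> * \<bar>deriv J \<mu>\<bar> = norm (integral {0..pi} (\<lambda>t. \<bar>\<mu> - 1\<bar> * (- 1 / (2 * u t * sqrt (u t)))))"
      unfolding dJ integral_mult_right by (simp add: abs_mult)
    also have "\<dots> \<le> integral {0..pi} (\<lambda>t. 1 / sqrt (u t))"
    proof (rule integral_norm_bound_integral[OF i1 i2])
      fix t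
      show "norm (\<bar>\<mu> - 1\<bar> * (- 1 / (2 * u t * sqrt (u t)))) \<le> 1 / sqrt (u t)"
        unfolding real_norm_def using True upos[of t] by (intro bnd1) auto
    qed
    also have "\<dots> = J \<mu>" unfolding u_def using J1[OF True] by simp
    finally show ?thesis by simp
  next
    case False
    then have m3: "\<mu> < 1" using m2 by simp
    define D where "D = (\<lambda>t. 1 - \<mu> + (1 + \<mu>) * (sin t)\<^sup>2)"
    have Dpos: "D t > 0" "1 - \<mu> \<le> D t" for t
    proof -
      have "(1 + \<mu>) * (sin t)\<^sup>2 \<ge> 0" using m1 by simp
      then show "D t > 0" "1 - \<mu> \<le> D t" using m3 by (auto simp: D_def)
    qed
    have dJ: "deriv J \<mu> = integral {0..pi/2} (\<lambda>t. (1 - (sin t)\<^sup>2) / (D t * sqrt (D t)))"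
      unfolding D_def by (rule DERIV_imp_deriv[OF D2[OF m1 m3]])
    have i1: "(\<lambda>t. \<bar>\<mu> - 1\<bar> * ((1 - (sin t)\<^sup>2) / (D t * sqrt (D t)))) integrable_on {0..pi/2}"
    proof (intro integrable_continuous_interval continuous_intros ballI)
      fix t show "D t * sqrt (D t) \<noteq> 0" using Dpos(1)[of t] by simp
    qed (simp add: D_def, intro continuous_intros)+
    have i2: "(\<lambda>t. 2 / sqrt (D t)) integrable_on {0..pi/2}"
    proof (intro integrable_continuous_interval continuous_intros ballI)
      fix t show "sqrt (D t) \<noteq> 0" using Dpos(1)[of t] by simp
    qed (simp add: D_def, intro continuous_intros)
    have "\<bar>\<mu> - 1\<bar> * \<bar>deriv J \<mu>\<bar> = norm (integral {0..pi/2} (\<lambda>t. \<bar>\<mu> - 1\<bar> * ((1 - (sin t)\<^sup>2) / (D t * sqrt (D t)))))"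
      unfolding dJ integral_mult_right by (simp add: abs_mult)
    also have "\<dots> \<le> integral {0..pi/2} (\<lambda>t. 2 / sqrt (D t))"
    proof (rule integral_norm_bound_integral[OF i1 i2])
      fix t :: real
      have s: "(sin t)\<^sup>2 \<le> 1" "0 \<le> (sin t)\<^sup>2" using sin_squared_eq[of t] zero_le_power2[of "cos t"] zero_le_power2[of "sin t"] by linarith+
      show "norm (\<bar>\<mu> - 1\<bar> * ((1 - (sin t)\<^sup>2) / (D t * sqrt (D t)))) \<le> 2 / sqrt (D t)"
        unfolding real_norm_def using m3 s Dpos[of t] by (intro bnd2) auto
    qed
    also have "\<dots> = J \<mu>" unfolding D_def using J2[OF m1 m3] by simp
    finally show ?thesis by simp
  qed
qed

end
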